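(* There is a Borel function $f:(\omega^\omega)^3\to\omega^\omega$ which has no superperfect free subset.
   Context: A tree $T\subseteq\omega^{<\omega}$ is superperfect if for every $\sigma\in T$ there is $\tau\supseteq\sigma$ in $T$ such that $\tau^\frown\langle n\rangle\in T$ for infinitely many $n$; a superperfect set is a set of the form $[T]$ (the infinite branches of $T$) for a superperfect tree $T$. A set $A\subseteq\omega^\omega$ is free for $f:(\omega^\omega)^3\to\omega^\omega$ if for all $(a_0,a_1,a_2)\in A^3$, $f(a_0,a_1,a_2)\in\{a_0,a_1,a_2\}\cup(\omega^\omega\setminus A)$. *)

theory Defs
  imports "HOL-Analysis.Analysis" "HOL-Library.Sublist"
begin

text \<open>Baire space is \<open>nat \<Rightarrow> nat\<close> with the product topology of discrete \<open>nat\<close>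
  (library instance of \<open>topological_space\<close> on function types);
  \<open>\<omega>\<^sup><\<^sup>\<omega>\<close> is \<open>nat list\<close>, and extension of finite sequences is \<open>prefix\<close>.\<close>

definition is_tree :: "nat list set \<Rightarrow> bool" where
  "is_tree T \<longleftrightarrow> T \<noteq> {} \<and> (\<forall>\<sigma>\<in>T. \<forall>\<rho>. prefix \<rho> \<sigma> \<longrightarrow> \<rho> \<in> T)"

definition superperfect_tree :: "nat list set \<Rightarrow> bool" where
  "superperfect_tree T \<longleftrightarrow> is_tree T \<and>
     (\<forall>\<sigma>\<in>T. \<exists>\<tau>\<in>T. prefix \<sigma> \<tau> \<and> infinite {n. \<tau> @ [n] \<in> T})"

definition branches :: "nat list set \<Rightarrow> (nat \<Rightarrow> nat) set" where
  "branches T = {x. \<forall>n. map x [0..<n] \<in> T}"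

definition superperfect_set :: "(nat \<Rightarrow> nat) set \<Rightarrow> bool" where
  "superperfect_set A \<longleftrightarrow> (\<exists>T. superperfect_tree T \<and> A = branches T)"

definition free_for :: "(nat \<Rightarrow> nat) set \<Rightarrow>
    ((nat \<Rightarrow> nat) \<times> (nat \<Rightarrow> nat) \<times> (nat \<Rightarrow> nat) \<Rightarrow> (nat \<Rightarrow> nat)) \<Rightarrow> bool" where
  "free_for A f \<longleftrightarrow> (\<forall>a0\<in>A. \<forall>a1\<in>A. \<forall>a2\<in>A.
      f (a0, a1, a2) \<in> {a0, a1, a2} \<union> (UNIV - A))"

end

theory Submission
  imports Defs
begin


type_synonym trip = "(nat \<Rightarrow> nat) \<times> (nat \<Rightarrow> nat) \<times> (nat \<Rightarrow> nat)"

definition dstep :: "trip \<Rightarrow> nat \<times> nat \<times> nat \<times> nat \<Rightarrow> nat \<times> nat \<times> nat \<times> nat" where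
  "dstep w st = (let px = LEAST n. fst st < n \<and> snd (snd (snd st)) < fst w n;
       py = LEAST n. fst (snd st) < n \<and> fst w px < fst (snd w) n;
       pz = LEAST n. fst (snd (snd st)) < n \<and> fst w px < snd (snd w) n
   in (px, py, pz, max (fst (snd w) py) (snd (snd w) pz)))"

definition dinit :: "trip \<Rightarrow> nat \<times> nat \<times> nat \<times> nat" where
  "dinit w = (let d = LEAST n. fst (snd w) n \<noteq> snd (snd w) n in
     (d, d, d, max (fst (snd w) d) (snd (snd w) d)))"

primrec dstate :: "trip \<Rightarrow> nat \<Rightarrow> nat \<times> nat \<times> nat \<times> nat" where
  "dstate w 0 = dinit w"
| "dstate w (Suc j) = dstep w (dstate w j)"

definition dbit :: "trip \<Rightarrow> nat \<Rightarrow> bool" where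
  "dbit w j = (let s = dstep w (dstate w j) in fst (snd w) (fst (snd s)) < snd (snd w) (fst (snd (snd s))))"

definition F :: "trip \<Rightarrow> nat \<Rightarrow> nat" where
  "F w k = (LEAST i. dbit w (prod_encode (k, i)))"

lemma nat_borel_cs: "(g \<in> M \<rightarrow>\<^sub>M (borel::nat measure)) \<longleftrightarrow> g \<in> M \<rightarrow>\<^sub>M count_space UNIV"
proof -
  have "measurable M (borel::nat measure) = measurable M (count_space UNIV)"
    by (rule measurable_cong_sets) (simp_all add: sets_borel_eq_count_space)
  then show ?thesis by simp
qed

lemma less_meas: "a \<in> M \<rightarrow>\<^sub>M count_space (UNIV::nat set) \<Longrightarrow> b \<in> M \<rightarrow>\<^sub>M count_space (UNIV::nat set) \<Longrightarrow>
  (\<lambda>w. a w < b w) \<in> M \<rightarrow>\<^sub>M count_space UNIV"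
  apply (rule measurable_compose_countable[where f="\<lambda>i w. i < b w" and g=a])
   apply (rule measurable_compose[where f=b, OF _ measurable_count_space])
  by auto

lemma fst_meas: "(fst :: trip \<Rightarrow> _) \<in> borel \<rightarrow>\<^sub>M borel"
  using measurable_fst[of "borel::(nat\<Rightarrow>nat) measure" "borel::((nat\<Rightarrow>nat)\<times>(nat\<Rightarrow>nat)) measure"] unfolding borel_prod .
lemma snd_meas: "(snd :: trip \<Rightarrow> _) \<in> borel \<rightarrow>\<^sub>M borel"
  using measurable_snd[of "borel::(nat\<Rightarrow>nat) measure" "borel::((nat\<Rightarrow>nat)\<times>(nat\<Rightarrow>nat)) measure"] unfolding borel_prod .
lemma snd_meas2: "(snd :: (nat\<Rightarrow>nat)\<times>(nat\<Rightarrow>nat) \<Rightarrow> _) \<in> borel \<rightarrow>\<^sub>M borel"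
  using measurable_snd[of "borel::(nat\<Rightarrow>nat) measure" "borel::(nat\<Rightarrow>nat) measure"] unfolding borel_prod .
lemma fst_meas2: "(fst :: (nat\<Rightarrow>nat)\<times>(nat\<Rightarrow>nat) \<Rightarrow> _) \<in> borel \<rightarrow>\<^sub>M borel"
  using measurable_fst[of "borel::(nat\<Rightarrow>nat) measure" "borel::(nat\<Rightarrow>nat) measure"] unfolding borel_prod .

lemma c0[measurable]: "(\<lambda>w::trip. fst w n) \<in> borel \<rightarrow>\<^sub>M count_space UNIV"
proof -
  have h: "(\<lambda>x::nat\<Rightarrow>nat. x n) \<circ> (fst :: trip \<Rightarrow> _) \<in> borel \<rightarrow>\<^sub>M (borel::nat measure)"
    by (rule measurable_comp[OF fst_meas measurable_product_coordinates])
  have "(\<lambda>w::trip. fst w n) = (\<lambda>x::nat\<Rightarrow>nat. x n) \<circ> (fst :: trip \<Rightarrow> _)" by (simp add: comp_def)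
  then have "(\<lambda>w::trip. fst w n) \<in> borel \<rightarrow>\<^sub>M (borel::nat measure)" using h by (simp only:)
  then show ?thesis by (rule nat_borel_cs[THEN iffD1])
qed
lemma c1[measurable]: "(\<lambda>w::trip. fst (snd w) n) \<in> borel \<rightarrow>\<^sub>M count_space UNIV"
proof -
  have h: "(\<lambda>x::nat\<Rightarrow>nat. x n) \<circ> (fst \<circ> (snd :: trip \<Rightarrow> _)) \<in> borel \<rightarrow>\<^sub>M (borel::nat measure)"
    by (rule measurable_comp[OF measurable_comp[OF snd_meas fst_meas2] measurable_product_coordinates])
  have "(\<lambda>w::trip. fst (snd w) n) = (\<lambda>x::nat\<Rightarrow>nat. x n) \<circ> (fst \<circ> (snd :: trip \<Rightarrow> _))" by (simp add: comp_def)
  then have "(\<lambda>w::trip. fst (snd w) n) \<in> borel \<rightarrow>\<^sub>M (borel::nat measure)" using h by (simp only:)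
  then show ?thesis by (rule nat_borel_cs[THEN iffD1])
qed
lemma c2[measurable]: "(\<lambda>w::trip. snd (snd w) n) \<in> borel \<rightarrow>\<^sub>M count_space UNIV"
proof -
  have h: "(\<lambda>x::nat\<Rightarrow>nat. x n) \<circ> (snd \<circ> (snd :: trip \<Rightarrow> _)) \<in> borel \<rightarrow>\<^sub>M (borel::nat measure)"
    by (rule measurable_comp[OF measurable_comp[OF snd_meas snd_meas2] measurable_product_coordinates])
  have "(\<lambda>w::trip. snd (snd w) n) = (\<lambda>x::nat\<Rightarrow>nat. x n) \<circ> (snd \<circ> (snd :: trip \<Rightarrow> _))" by (simp add: comp_def)
  then have "(\<lambda>w::trip. snd (snd w) n) \<in> borel \<rightarrow>\<^sub>M (borel::nat measure)" using h by (simp only:)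
  then show ?thesis by (rule nat_borel_cs[THEN iffD1])
qed

lemma c0g[measurable]: "g \<in> borel \<rightarrow>\<^sub>M count_space UNIV \<Longrightarrow> (\<lambda>w::trip. fst w (g w)) \<in> borel \<rightarrow>\<^sub>M count_space UNIV"
  by (rule measurable_compose_countable[where f="\<lambda>i w. fst w i"]) auto
lemma c1g[measurable]: "g \<in> borel \<rightarrow>\<^sub>M count_space UNIV \<Longrightarrow> (\<lambda>w::trip. fst (snd w) (g w)) \<in> borel \<rightarrow>\<^sub>M count_space UNIV"
  by (rule measurable_compose_countable[where f="\<lambda>i w. fst (snd w) i"]) auto
lemma c2g[measurable]: "g \<in> borel \<rightarrow>\<^sub>M count_space UNIV \<Longrightarrow> (\<lambda>w::trip. snd (snd w) (g w)) \<in> borel \<rightarrow>\<^sub>M count_space UNIV"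
  by (rule measurable_compose_countable[where f="\<lambda>i w. snd (snd w) i"]) auto

lemma binop_meas:
  fixes f :: "'a \<Rightarrow> 'b::countable" and g :: "'a \<Rightarrow> 'c::countable"
  assumes "f \<in> M \<rightarrow>\<^sub>M count_space UNIV" "g \<in> M \<rightarrow>\<^sub>M count_space UNIV"
  shows "(\<lambda>w. h (f w) (g w)) \<in> M \<rightarrow>\<^sub>M (count_space UNIV :: 'd measure)"
  apply (rule measurable_compose_countable[where f="\<lambda>i w. h i (g w)" and g=f])
   apply (rule measurable_compose[where f=g, OF assms(2) measurable_count_space])
  by (rule assms(1))

lemma least_pat:
  assumes "\<And>n. (\<lambda>w. Q w n) \<in> M \<rightarrow>\<^sub>M count_space UNIV"
  shows "(\<lambda>w. LEAST n::nat. a < n \<and> Q w n) \<in> M \<rightarrow>\<^sub>M count_space UNIV"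
proof (rule measurable_Least)
  fix n
  show "(\<lambda>w. a < n \<and> Q w n) \<in> M \<rightarrow>\<^sub>M count_space UNIV"
    by (rule binop_meas[where h="(\<and>)" and f="\<lambda>w. a < n" and g="\<lambda>w. Q w n", OF measurable_count_space_const assms])
qed

lemma dstep_meas: "(\<lambda>w. dstep w st) \<in> borel \<rightarrow>\<^sub>M count_space UNIV"
proof -
  obtain lx ly lz t where st: "st = (lx,ly,lz,t)" using prod_cases4 by blast
  define px where "px w = (LEAST n. lx < n \<and> t < fst w n)" for w :: trip
  define py where "py w = (LEAST n. ly < n \<and> fst w (px w) < fst (snd w) n)" for w :: trip
  define pz where "pz w = (LEAST n. lz < n \<and> fst w (px w) < snd (snd w) n)" for w :: trip
  have mpx: "px \<in> borel \<rightarrow>\<^sub>M count_space UNIV" unfolding px_def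
    by (rule least_pat, rule binop_meas[where h="(<)", OF measurable_count_space_const c0])
  have mpy: "py \<in> borel \<rightarrow>\<^sub>M count_space UNIV" unfolding py_def
    by (rule least_pat, rule binop_meas[where h="(<)", OF c0g[OF mpx] c1])
  have mpz: "pz \<in> borel \<rightarrow>\<^sub>M count_space UNIV" unfolding pz_def
    by (rule least_pat, rule binop_meas[where h="(<)", OF c0g[OF mpx] c2])
  have m: "(\<lambda>w. max (fst (snd w) (py w)) (snd (snd w) (pz w))) \<in> borel \<rightarrow>\<^sub>M count_space UNIV"
    by (rule binop_meas[where h=max, OF c1g[OF mpy] c2g[OF mpz]])
  have eq: "(\<lambda>w. dstep w st) = (\<lambda>w. (px w, py w, pz w, max (fst (snd w) (py w)) (snd (snd w) (pz w))))"
    unfolding dstep_def st px_def py_def pz_def Let_def by simp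
  show ?thesis unfolding eq
    by (rule binop_meas[where h=Pair, OF mpx binop_meas[where h=Pair, OF mpy binop_meas[where h=Pair, OF mpz m]]])
qed

lemma dinit_meas: "dinit \<in> borel \<rightarrow>\<^sub>M count_space UNIV"
proof -
  define d where "d w = (LEAST n. fst (snd w) n \<noteq> snd (snd w) n)" for w :: trip
  have md: "d \<in> borel \<rightarrow>\<^sub>M count_space UNIV" unfolding d_def
    by (rule measurable_Least, rule binop_meas[where h="(\<noteq>)", OF c1 c2])
  have m: "(\<lambda>w. max (fst (snd w) (d w)) (snd (snd w) (d w))) \<in> borel \<rightarrow>\<^sub>M count_space UNIV"
    by (rule binop_meas[where h=max, OF c1g[OF md] c2g[OF md]])
  have eq: "dinit = (\<lambda>w. (d w, d w, d w, max (fst (snd w) (d w)) (snd (snd w) (d w))))"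
    unfolding dinit_def d_def Let_def by (rule ext) simp
  show ?thesis unfolding eq
    by (rule binop_meas[where h=Pair, OF md binop_meas[where h=Pair, OF md binop_meas[where h=Pair, OF md m]]])
qed

lemma dstate_meas[measurable]: "(\<lambda>w. dstate w j) \<in> borel \<rightarrow>\<^sub>M count_space UNIV"
proof (induction j)
  case 0 then show ?case using dinit_meas by simp
next
  case (Suc j)
  show ?case using measurable_compose_countable[where f="\<lambda>st w. dstep w st", OF dstep_meas Suc] by simp
qed

lemma dbit_meas[measurable]: "(\<lambda>w. dbit w j) \<in> borel \<rightarrow>\<^sub>M count_space UNIV"
proof -
  have s: "(\<lambda>w. dstep w (dstate w j)) \<in> borel \<rightarrow>\<^sub>M count_space UNIV"
    by (rule measurable_compose_countable[where f="\<lambda>st w. dstep w st" and g="\<lambda>w. dstate w j"]) (rule dstep_meas, rule dstate_meas)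
  have a: "(\<lambda>w. fst (snd (dstep w (dstate w j)))) \<in> borel \<rightarrow>\<^sub>M count_space UNIV"
    by (rule measurable_compose[OF s measurable_count_space])
  have b: "(\<lambda>w. fst (snd (snd (dstep w (dstate w j))))) \<in> borel \<rightarrow>\<^sub>M count_space UNIV"
    by (rule measurable_compose[OF s measurable_count_space])
  show ?thesis unfolding dbit_def Let_def by (rule less_meas[OF c1g[OF a] c2g[OF b]])
qed

lemma F_meas: "F \<in> borel \<rightarrow>\<^sub>M borel"
proof (rule measurable_coordinatewise_then_product)
  fix k show "(\<lambda>w. F w k) \<in> borel_measurable borel"
    unfolding nat_borel_cs F_def by (rule measurable_Least) (rule dbit_meas)
qed



definition spl :: "nat list set \<Rightarrow> nat list \<Rightarrow> bool" where
  "spl T s \<longleftrightarrow> s \<in> T \<and> infinite {n. s @ [n] \<in> T}"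

definition extn :: "nat list set \<Rightarrow> nat list \<Rightarrow> nat list" where
  "extn T s = (SOME t. spl T t \<and> prefix s t)"

definition bigsucc :: "nat list set \<Rightarrow> nat list \<Rightarrow> nat \<Rightarrow> nat" where
  "bigsucc T s B = (SOME v. s @ [v] \<in> T \<and> B < v)"

definition mv :: "nat list set \<Rightarrow> nat list \<Rightarrow> nat \<Rightarrow> nat list" where
  "mv T s B = extn T (s @ [bigsucc T s B])"

lemma tree_closed: "superperfect_tree T \<Longrightarrow> t \<in> T \<Longrightarrow> prefix s t \<Longrightarrow> s \<in> T"
  unfolding superperfect_tree_def is_tree_def by blast

lemma nil_in: "superperfect_tree T \<Longrightarrow> [] \<in> T"
  unfolding superperfect_tree_def is_tree_def by (metis all_not_in_conv prefix_bot.extremum)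

lemma ext_prop: assumes "superperfect_tree T" "s \<in> T"
  shows "spl T (extn T s) \<and> prefix s (extn T s)"
proof -
  have "\<exists>t. spl T t \<and> prefix s t" using assms unfolding superperfect_tree_def spl_def by blast
  then show ?thesis unfolding extn_def by (rule someI_ex)
qed

lemma bigsucc_prop: assumes "spl T s"
  shows "s @ [bigsucc T s B] \<in> T \<and> B < bigsucc T s B"
proof -
  have "\<exists>v. s @ [v] \<in> T \<and> B < v"
    using assms unfolding spl_def infinite_nat_iff_unbounded by auto
  then show ?thesis unfolding bigsucc_def by (rule someI_ex)
qed

lemma mv_prop: assumes "superperfect_tree T" "spl T s"
  shows "spl T (mv T s B)" "prefix s (mv T s B)" "length s < length (mv T s B)"
    "mv T s B ! length s = bigsucc T s B" "B < bigsucc T s B"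
proof -
  have b: "s @ [bigsucc T s B] \<in> T" "B < bigsucc T s B" using bigsucc_prop[OF assms(2)] by auto
  have e: "spl T (mv T s B)" "prefix (s @ [bigsucc T s B]) (mv T s B)"
    using ext_prop[OF assms(1) b(1)] unfolding mv_def by auto
  then show "spl T (mv T s B)" "B < bigsucc T s B" using b by auto
  have "prefix s (s @ [bigsucc T s B])" by simp
  then show "prefix s (mv T s B)" using e(2) by (rule prefix_order.trans)
  show "length s < length (mv T s B)" using e(2) prefix_length_le by fastforce
  show "mv T s B ! length s = bigsucc T s B" using e(2)
    by (metis length_append_singleton lessI nth_append_length prefix_def nth_append)
qed

definition blim :: "(nat \<Rightarrow> nat list) \<Rightarrow> nat \<Rightarrow> nat" where
  "blim L n = L n ! n"

lemma chain_prefix: assumes "\<And>j. prefix (L j) (L (Suc j))" "j \<le> k"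
  shows "prefix (L j) (L k)"
  using assms(2)
proof (induction k)
  case 0 then show ?case by simp
next
  case (Suc k)
  then show ?case
    by (metis assms(1) le_Suc_eq prefix_order.order_refl prefix_order.trans)
qed

lemma prefix_nth': "prefix xs ys \<Longrightarrow> n < length xs \<Longrightarrow> xs ! n = ys ! n"
  by (metis nth_append prefix_def)

lemma lim_nth: assumes "\<And>j. prefix (L j) (L (Suc j))" "\<And>j. j < length (L j)" "n < length (L k)"
  shows "blim L n = L k ! n"
proof (cases "n \<le> k")
  case True
  then show ?thesis unfolding blim_def using chain_prefix[of L, OF assms(1) True] assms(2) prefix_nth' by blast
next
  case False
  then have "k \<le> n" by simp
  then show ?thesis unfolding blim_def using chain_prefix[of L, OF assms(1), of k n] assms(3) prefix_nth' by metis
qed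

lemma lim_branch: assumes "superperfect_tree T" "\<And>j. prefix (L j) (L (Suc j))" "\<And>j. j < length (L j)"
  "\<And>j. L j \<in> T"
  shows "blim L \<in> branches T"
  unfolding branches_def
proof (intro CollectI allI)
  fix n
  have "map (blim L) [0..<n] = take n (L n)"
    by (rule nth_equalityI) (use assms(3)[of n] lim_nth[OF assms(2,3), of _ n] in \<open>auto simp: less_imp_le_nat\<close>)
  moreover have "take n (L n) \<in> T" using tree_closed[OF assms(1) assms(4)] take_is_prefix by blast
  ultimately show "map (blim L) [0..<n] \<in> T" by simp
qed

type_synonym st = "nat list \<times> nat list \<times> nat list \<times> nat"

definition mvX :: "nat list set \<Rightarrow> st \<Rightarrow> st" where
  "mvX T st = (case st of (X,Y,Z,M) \<Rightarrow> (mv T X M, Y, Z, M + sum_list (mv T X M)))"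
definition mvY :: "nat list set \<Rightarrow> st \<Rightarrow> st" where
  "mvY T st = (case st of (X,Y,Z,M) \<Rightarrow> (X, mv T Y M, Z, M + sum_list (mv T Y M)))"
definition mvZ :: "nat list set \<Rightarrow> st \<Rightarrow> st" where
  "mvZ T st = (case st of (X,Y,Z,M) \<Rightarrow> (X, Y, mv T Z M, M + sum_list (mv T Z M)))"

definition blk :: "nat list set \<Rightarrow> bool \<Rightarrow> st \<Rightarrow> st" where
  "blk T b st = (if b then mvZ T (mvY T (mvX T st)) else mvY T (mvZ T (mvX T st)))"

definition good :: "nat list set \<Rightarrow> st \<Rightarrow> bool" where
  "good T st = (case st of (X,Y,Z,M) \<Rightarrow> spl T X \<and> spl T Y \<and> spl T Z \<and> (\<forall>v\<in>set X \<union> set Y \<union> set Z. v \<le> M))"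

lemma mv_bound: assumes "superperfect_tree T" "spl T X"
  shows "\<forall>v\<in>set (mv T X B). v \<le> B + sum_list (mv T X B)"
    "bigsucc T X B \<le> B + sum_list (mv T X B)"
    "\<And>n. n < length (mv T X B) \<Longrightarrow> mv T X B ! n \<le> B + sum_list (mv T X B)"
proof -
  show "\<forall>v\<in>set (mv T X B). v \<le> B + sum_list (mv T X B)"
    using member_le_sum_list[of _ "mv T X B"] by (auto intro: trans_le_add2)
  then show "\<And>n. n < length (mv T X B) \<Longrightarrow> mv T X B ! n \<le> B + sum_list (mv T X B)"
    by auto
  then show "bigsucc T X B \<le> B + sum_list (mv T X B)"
    using mv_prop[OF assms, of B] by metis
qed

lemma blk_prop: assumes T: "superperfect_tree T" and g: "good T (X,Y,Z,M)" and e: "blk T b (X,Y,Z,M) = (X',Y',Z',M')"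
  shows "\<exists>vx vy vz. good T (X',Y',Z',M') \<and> prefix X X' \<and> prefix Y Y' \<and> prefix Z Z'
     \<and> length X < length X' \<and> length Y < length Y' \<and> length Z < length Z'
     \<and> X' ! length X = vx \<and> Y' ! length Y = vy \<and> Z' ! length Z = vz
     \<and> M < vx \<and> vx < vy \<and> vx < vz \<and> (b \<longleftrightarrow> vy < vz)
     \<and> (\<forall>n. length X < n \<and> n < length X' \<longrightarrow> X' ! n < vy \<and> X' ! n < vz)"
proof -
  have sX: "spl T X" and sY: "spl T Y" and sZ: "spl T Z" and bd: "\<forall>v\<in>set X \<union> set Y \<union> set Z. v \<le> M"
    using g unfolding good_def by auto
  define X1 where "X1 = mv T X M"
  define M1 where "M1 = M + sum_list X1"
  define vx where "vx = bigsucc T X M"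
  note px = mv_prop[OF T sX, of M, folded X1_def vx_def]
  note bx = mv_bound[OF T sX, where B=M, folded X1_def vx_def M1_def]
  have MM1: "M \<le> M1" unfolding M1_def by simp
  show ?thesis
  proof (cases b)
    case True
    define Y1 where "Y1 = mv T Y M1"
    define M2 where "M2 = M1 + sum_list Y1"
    define vy where "vy = bigsucc T Y M1"
    note py = mv_prop[OF T sY, of M1, folded Y1_def vy_def]
    note by' = mv_bound[OF T sY, where B=M1, folded Y1_def vy_def M2_def]
    define Z1 where "Z1 = mv T Z M2"
    define M3 where "M3 = M2 + sum_list Z1"
    define vz where "vz = bigsucc T Z M2"
    note pz = mv_prop[OF T sZ, of M2, folded Z1_def vz_def]
    note bz = mv_bound[OF T sZ, where B=M2, folded Z1_def vz_def M3_def]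
    have eq: "X' = X1" "Y' = Y1" "Z' = Z1" "M' = M3" using e True
      unfolding blk_def mvX_def mvY_def mvZ_def X1_def M1_def Y1_def M2_def Z1_def M3_def by auto
    have M12: "M1 \<le> M2" "M2 \<le> M3" unfolding M2_def M3_def by auto
    have "good T (X',Y',Z',M')" unfolding good_def eq using px(1) py(1) pz(1) bx(1) by'(1) bz(1) M12 by fastforce
    moreover have "\<forall>n. length X < n \<and> n < length X' \<longrightarrow> X' ! n < vy \<and> X' ! n < vz"
      using bx(3) py(5) pz(5) M12 unfolding eq by fastforce
    ultimately show ?thesis
      using px py pz bx by' bz M12 MM1 True unfolding eq by (intro exI[of _ vx] exI[of _ vy] exI[of _ vz]) auto
  next
    case False
    define Z1 where "Z1 = mv T Z M1"
    define M2 where "M2 = M1 + sum_list Z1"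
    define vz where "vz = bigsucc T Z M1"
    note pz = mv_prop[OF T sZ, of M1, folded Z1_def vz_def]
    note bz = mv_bound[OF T sZ, where B=M1, folded Z1_def vz_def M2_def]
    define Y1 where "Y1 = mv T Y M2"
    define M3 where "M3 = M2 + sum_list Y1"
    define vy where "vy = bigsucc T Y M2"
    note py = mv_prop[OF T sY, of M2, folded Y1_def vy_def]
    note by' = mv_bound[OF T sY, where B=M2, folded Y1_def vy_def M3_def]
    have eq: "X' = X1" "Y' = Y1" "Z' = Z1" "M' = M3" using e False
      unfolding blk_def mvX_def mvY_def mvZ_def X1_def M1_def Y1_def M2_def Z1_def M3_def by auto
    have M12: "M1 \<le> M2" "M2 \<le> M3" unfolding M2_def M3_def by auto
    have "good T (X',Y',Z',M')" unfolding good_def eq using px(1) py(1) pz(1) bx(1) by'(1) bz(1) M12 by fastforce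
    moreover have "\<forall>n. length X < n \<and> n < length X' \<longrightarrow> X' ! n < vy \<and> X' ! n < vz"
      using bx(3) py(5) pz(5) M12 unfolding eq by fastforce
    ultimately show ?thesis
      using px py pz bx by' bz M12 MM1 False unfolding eq by (intro exI[of _ vx] exI[of _ vy] exI[of _ vz]) auto
  qed
qed



primrec CS :: "nat list set \<Rightarrow> nat list \<Rightarrow> nat \<Rightarrow> (nat \<Rightarrow> bool) \<Rightarrow> nat \<Rightarrow> st" where
  "CS T s M0 bs 0 = blk T True (s,s,s,M0)"
| "CS T s M0 bs (Suc q) = blk T (bs q) (CS T s M0 bs q)"

locale constr =
  fixes T :: "nat list set" and s :: "nat list" and M0 :: nat and bs :: "nat \<Rightarrow> bool"
  assumes T: "superperfect_tree T" and sp: "spl T s" and g0: "\<forall>v\<in>set s. v \<le> M0"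
begin

definition XS :: "nat \<Rightarrow> nat list" where "XS q = fst (CS T s M0 bs q)"
definition YS :: "nat \<Rightarrow> nat list" where "YS q = fst (snd (CS T s M0 bs q))"
definition ZS :: "nat \<Rightarrow> nat list" where "ZS q = fst (snd (snd (CS T s M0 bs q)))"
definition MS :: "nat \<Rightarrow> nat" where "MS q = snd (snd (snd (CS T s M0 bs q)))"

lemma CS_eq: "CS T s M0 bs q = (XS q, YS q, ZS q, MS q)"
  unfolding XS_def YS_def ZS_def MS_def by simp

lemma good0: "good T (s,s,s,M0)" unfolding good_def using sp g0 by auto

lemma blk0: "\<exists>vx vy vz. good T (XS 0, YS 0, ZS 0, MS 0) \<and> prefix s (XS 0) \<and> prefix s (YS 0) \<and> prefix s (ZS 0)
     \<and> length s < length (XS 0) \<and> length s < length (YS 0) \<and> length s < length (ZS 0)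
     \<and> XS 0 ! length s = vx \<and> YS 0 ! length s = vy \<and> ZS 0 ! length s = vz
     \<and> M0 < vx \<and> vx < vy \<and> vx < vz \<and> (True \<longleftrightarrow> vy < vz)
     \<and> (\<forall>n. length s < n \<and> n < length (XS 0) \<longrightarrow> XS 0 ! n < vy \<and> XS 0 ! n < vz)"
  by (rule blk_prop[OF T good0]) (metis CS.simps(1) CS_eq)

lemma goodj: "good T (XS q, YS q, ZS q, MS q)"
proof (induction q)
  case 0 then show ?case using blk0 by blast
next
  case (Suc q)
  show ?case using blk_prop[OF T Suc, of "bs q"] by (metis CS.simps(2) CS_eq)
qed

lemma blkS: "\<exists>vx vy vz. good T (XS (Suc q), YS (Suc q), ZS (Suc q), MS (Suc q)) \<and> prefix (XS q) (XS (Suc q)) \<and> prefix (YS q) (YS (Suc q)) \<and> prefix (ZS q) (ZS (Suc q))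
     \<and> length (XS q) < length (XS (Suc q)) \<and> length (YS q) < length (YS (Suc q)) \<and> length (ZS q) < length (ZS (Suc q))
     \<and> XS (Suc q) ! length (XS q) = vx \<and> YS (Suc q) ! length (YS q) = vy \<and> ZS (Suc q) ! length (ZS q) = vz
     \<and> MS q < vx \<and> vx < vy \<and> vx < vz \<and> (bs q \<longleftrightarrow> vy < vz)
     \<and> (\<forall>n. length (XS q) < n \<and> n < length (XS (Suc q)) \<longrightarrow> XS (Suc q) ! n < vy \<and> XS (Suc q) ! n < vz)"
  by (rule blk_prop[OF T goodj]) (metis CS.simps(2) CS_eq)

lemma lenX: "q < length (XS q)"
proof (induction q)
  case 0 then show ?case using blk0 by auto
next
  case (Suc q) then show ?case using blkS[of q] by auto
qed
lemma lenY: "q < length (YS q)"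
proof (induction q)
  case 0 then show ?case using blk0 by auto
next
  case (Suc q) then show ?case using blkS[of q] by auto
qed
lemma lenZ: "q < length (ZS q)"
proof (induction q)
  case 0 then show ?case using blk0 by auto
next
  case (Suc q) then show ?case using blkS[of q] by auto
qed

definition xx :: "nat \<Rightarrow> nat" where "xx = blim XS"
definition yy :: "nat \<Rightarrow> nat" where "yy = blim YS"
definition zz :: "nat \<Rightarrow> nat" where "zz = blim ZS"

lemma preX: "prefix (XS q) (XS (Suc q))" using blkS by blast
lemma preY: "prefix (YS q) (YS (Suc q))" using blkS by blast
lemma preZ: "prefix (ZS q) (ZS (Suc q))" using blkS by blast

lemma xx_nth: "n < length (XS k) \<Longrightarrow> xx n = XS k ! n"
  unfolding xx_def by (rule lim_nth[OF preX lenX])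
lemma yy_nth: "n < length (YS k) \<Longrightarrow> yy n = YS k ! n"
  unfolding yy_def by (rule lim_nth[OF preY lenY])
lemma zz_nth: "n < length (ZS k) \<Longrightarrow> zz n = ZS k ! n"
  unfolding zz_def by (rule lim_nth[OF preZ lenZ])

lemma inT: "XS q \<in> T" "YS q \<in> T" "ZS q \<in> T"
  using goodj[of q] unfolding good_def spl_def by auto

lemma brs: "xx \<in> branches T" "yy \<in> branches T" "zz \<in> branches T"
  unfolding xx_def yy_def zz_def
  by (rule lim_branch[OF T preX lenX inT(1)], rule lim_branch[OF T preY lenY inT(2)], rule lim_branch[OF T preZ lenZ inT(3)])

lemma bndX: "n < length (XS q) \<Longrightarrow> XS q ! n \<le> MS q" using goodj[of q] unfolding good_def by auto
lemma bndY: "n < length (YS q) \<Longrightarrow> YS q ! n \<le> MS q" using goodj[of q] unfolding good_def by auto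
lemma bndZ: "n < length (ZS q) \<Longrightarrow> ZS q ! n \<le> MS q" using goodj[of q] unfolding good_def by auto

definition dinv :: "nat \<Rightarrow> bool" where "dinv q \<longleftrightarrow> (case dstate (xx,yy,zz) q of (lx,ly,lz,t) \<Rightarrow>
   lx < length (XS q) \<and> ly < length (YS q) \<and> lz < length (ZS q) \<and> t \<le> MS q \<and>
   (\<forall>n. lx < n \<and> n < length (XS q) \<longrightarrow> xx n \<le> t))"

lemma inv_step: assumes "dinv q" shows "dinv (Suc q) \<and> dbit (xx,yy,zz) q = bs q"
proof -
  obtain lx ly lz t where ds: "dstate (xx,yy,zz) q = (lx,ly,lz,t)" using prod_cases4 by blast
  have I: "lx < length (XS q)" "ly < length (YS q)" "lz < length (ZS q)" "t \<le> MS q"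
     "\<And>n. lx < n \<Longrightarrow> n < length (XS q) \<Longrightarrow> xx n \<le> t"
    using assms ds unfolding dinv_def by auto
  obtain vx vy vz where B: "prefix (XS q) (XS (Suc q))" "prefix (YS q) (YS (Suc q))" "prefix (ZS q) (ZS (Suc q))"
     "length (XS q) < length (XS (Suc q))" "length (YS q) < length (YS (Suc q))" "length (ZS q) < length (ZS (Suc q))"
     "XS (Suc q) ! length (XS q) = vx" "YS (Suc q) ! length (YS q) = vy" "ZS (Suc q) ! length (ZS q) = vz"
     "MS q < vx" "vx < vy" "vx < vz" "bs q \<longleftrightarrow> vy < vz"
     "\<And>n. length (XS q) < n \<Longrightarrow> n < length (XS (Suc q)) \<Longrightarrow> XS (Suc q) ! n < vy \<and> XS (Suc q) ! n < vz"
    using blkS[of q] by blast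
  have gs: "good T (XS (Suc q), YS (Suc q), ZS (Suc q), MS (Suc q))" using goodj by blast
  have xv: "xx (length (XS q)) = vx" using xx_nth[OF B(4)] B(7) by simp
  have yv: "yy (length (YS q)) = vy" using yy_nth[OF B(5)] B(8) by simp
  have zv: "zz (length (ZS q)) = vz" using zz_nth[OF B(6)] B(9) by simp
  have px: "(LEAST n. lx < n \<and> t < xx n) = length (XS q)"
  proof (rule Least_equality)
    show "lx < length (XS q) \<and> t < xx (length (XS q))" using I(1,4) B(10) xv by simp
    fix m assume "lx < m \<and> t < xx m"
    then show "length (XS q) \<le> m" using I(5)[of m] by (meson not_le_imp_less not_less)
  qed
  have py: "(LEAST n. ly < n \<and> xx (length (XS q)) < yy n) = length (YS q)"
  proof (rule Least_equality)
    show "ly < length (YS q) \<and> xx (length (XS q)) < yy (length (YS q))" using I(2) B(11) xv yv by simp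
    fix m assume m: "ly < m \<and> xx (length (XS q)) < yy m"
    show "length (YS q) \<le> m"
    proof (rule ccontr)
      assume "\<not> length (YS q) \<le> m"
      then have "yy m \<le> MS q" using yy_nth[of m q] bndY[of m q] by simp
      then show False using m xv B(10) by simp
    qed
  qed
  have pz: "(LEAST n. lz < n \<and> xx (length (XS q)) < zz n) = length (ZS q)"
  proof (rule Least_equality)
    show "lz < length (ZS q) \<and> xx (length (XS q)) < zz (length (ZS q))" using I(3) B(12) xv zv by simp
    fix m assume m: "lz < m \<and> xx (length (XS q)) < zz m"
    show "length (ZS q) \<le> m"
    proof (rule ccontr)
      assume "\<not> length (ZS q) \<le> m"
      then have "zz m \<le> MS q" using zz_nth[of m q] bndZ[of m q] by simp
      then show False using m xv B(10) by simp
    qed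
  qed
  have st: "dstep (xx,yy,zz) (lx,ly,lz,t) = (length (XS q), length (YS q), length (ZS q), max vy vz)"
    unfolding dstep_def Let_def using px py pz yv zv by simp
  have ds2: "dstate (xx,yy,zz) (Suc q) = (length (XS q), length (YS q), length (ZS q), max vy vz)"
    using ds st by simp
  have "max vy vz \<le> MS (Suc q)"
    using gs B(5,6,8,9) unfolding good_def by (auto simp: max_def)
  moreover have "\<forall>n. length (XS q) < n \<and> n < length (XS (Suc q)) \<longrightarrow> xx n \<le> max vy vz"
    using B(14) xx_nth by (metis less_imp_le_nat max.coboundedI1)
  ultimately have "dinv (Suc q)" unfolding dinv_def ds2 using B(4,5,6) by simp
  moreover have "dbit (xx,yy,zz) q = bs q"
    unfolding dbit_def Let_def using ds st yv zv B(13) by simp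
  ultimately show ?thesis by simp
qed

lemma inv0: "dinv 0"
proof -
  obtain vx vy vz where B: "prefix s (XS 0)" "prefix s (YS 0)" "prefix s (ZS 0)"
     "length s < length (XS 0)" "length s < length (YS 0)" "length s < length (ZS 0)"
     "XS 0 ! length s = vx" "YS 0 ! length s = vy" "ZS 0 ! length s = vz"
     "M0 < vx" "vx < vy" "vx < vz" "vy < vz"
     "\<And>n. length s < n \<Longrightarrow> n < length (XS 0) \<Longrightarrow> XS 0 ! n < vy \<and> XS 0 ! n < vz"
    using blk0 by blast
  have yv: "yy (length s) = vy" using yy_nth[OF B(5)] B(8) by simp
  have zv: "zz (length s) = vz" using zz_nth[OF B(6)] B(9) by simp
  have d: "(LEAST n. yy n \<noteq> zz n) = length s"
  proof (rule Least_equality)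
    show "yy (length s) \<noteq> zz (length s)" using yv zv B(13) by simp
    fix m assume m: "yy m \<noteq> zz m"
    show "length s \<le> m"
    proof (rule ccontr)
      assume "\<not> length s \<le> m"
      then have "m < length s" by simp
      then have "yy m = s ! m" "zz m = s ! m"
        using yy_nth[of m 0] zz_nth[of m 0] B(5,6) prefix_nth'[OF B(2), of m] prefix_nth'[OF B(3), of m] by auto
      then show False using m by simp
    qed
  qed
  have ds: "dstate (xx,yy,zz) 0 = (length s, length s, length s, max vy vz)"
    unfolding dstate.simps dinit_def Let_def using d yv zv by simp
  have "max vy vz \<le> MS 0"
    using goodj[of 0] B(5,6,8,9) unfolding good_def by (auto simp: max_def)
  moreover have "\<forall>n. length s < n \<and> n < length (XS 0) \<longrightarrow> xx n \<le> max vy vz"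
    using B(14) xx_nth by (metis less_imp_le_nat max.coboundedI1)
  ultimately show ?thesis unfolding dinv_def ds using B(4,5,6) by simp
qed

lemma inv_all: "dinv q"
  by (induction q) (use inv0 inv_step in auto)

lemma dbit_eq: "dbit (xx,yy,zz) q = bs q"
  using inv_step[OF inv_all] by simp

lemma first_vals: "M0 < xx (length s)" "M0 < yy (length s)" "M0 < zz (length s)"
proof -
  obtain vx vy vz where B: 
     "length s < length (XS 0)" "length s < length (YS 0)" "length s < length (ZS 0)"
     "XS 0 ! length s = vx" "YS 0 ! length s = vy" "ZS 0 ! length s = vz"
     "M0 < vx" "vx < vy" "vx < vz"
    using blk0 by blast
  show "M0 < xx (length s)" "M0 < yy (length s)" "M0 < zz (length s)"
    using xx_nth[OF B(1)] yy_nth[OF B(2)] zz_nth[OF B(3)] B by auto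
qed

end

definition chainL :: "nat list set \<Rightarrow> nat \<Rightarrow> nat list" where
  "chainL T = rec_nat (mv T (extn T []) 0) (\<lambda>_ L. mv T L 0)"

lemma chainL_simps: "chainL T 0 = mv T (extn T []) 0" "chainL T (Suc q) = mv T (chainL T q) 0"
  unfolding chainL_def by simp_all

lemma some_branch: assumes T: "superperfect_tree T" shows "blim (chainL T) \<in> branches T"
proof -
  have e: "spl T (extn T [])" using ext_prop[OF T nil_in[OF T]] by simp
  have sp: "spl T (chainL T q)" for q
    by (induction q) (use mv_prop[OF T] e in \<open>auto simp: chainL_simps\<close>)
  have pre: "prefix (chainL T q) (chainL T (Suc q))" for q
    using mv_prop(2)[OF T sp] by (simp add: chainL_simps)
  have len: "q < length (chainL T q)" for q
  proof (induction q)
    case 0 then show ?case using mv_prop(3)[OF T e, of 0] unfolding chainL_simps by linarith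
  next
    case (Suc q) then show ?case using mv_prop(3)[OF T sp, of q 0] by (simp add: chainL_simps)
  qed
  have inT: "chainL T q \<in> T" for q using sp[of q] unfolding spl_def by simp
  show ?thesis by (rule lim_branch[OF T pre len inT])
qed

theorem proposition5p4:
  shows "\<exists>f :: (nat \<Rightarrow> nat) \<times> (nat \<Rightarrow> nat) \<times> (nat \<Rightarrow> nat) \<Rightarrow> (nat \<Rightarrow> nat).
           f \<in> borel \<rightarrow>\<^sub>M borel \<and> (\<forall>A. superperfect_set A \<longrightarrow> \<not> free_for A f)"
proof (intro exI conjI allI impI)
  show "F \<in> borel \<rightarrow>\<^sub>M borel" by (rule F_meas)
  fix A assume "superperfect_set A"
  then obtain T where T: "superperfect_tree T" and A: "A = branches T"
    unfolding superperfect_set_def by blast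
  define a3 where "a3 = blim (chainL T)"
  have a3A: "a3 \<in> A" unfolding a3_def A by (rule some_branch[OF T])
  define s where "s = extn T []"
  have sp: "spl T s" unfolding s_def using ext_prop[OF T nil_in[OF T]] by simp
  define M0 where "M0 = a3 (length s) + sum_list s"
  define bs where "bs q = (snd (prod_decode q) = a3 (fst (prod_decode q)))" for q
  have g0: "\<forall>v\<in>set s. v \<le> M0" unfolding M0_def using member_le_sum_list[of _ s] by (auto intro: trans_le_add2)
  interpret c: constr T s M0 bs using T sp g0 by unfold_locales
  have FF: "F (c.xx, c.yy, c.zz) = a3"
  proof
    fix k
    have "F (c.xx, c.yy, c.zz) k = (LEAST i. bs (prod_encode (k, i)))"
      unfolding F_def c.dbit_eq ..
    also have "\<dots> = (LEAST i. i = a3 k)" unfolding bs_def by simp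
    also have "\<dots> = a3 k" by (rule Least_equality) auto
    finally show "F (c.xx, c.yy, c.zz) k = a3 k" .
  qed
  have ne: "c.xx \<noteq> a3" "c.yy \<noteq> a3" "c.zz \<noteq> a3"
    using c.first_vals unfolding M0_def by auto
  show "\<not> free_for A F"
    unfolding free_for_def
  proof
    assume H: "\<forall>a0\<in>A. \<forall>a1\<in>A. \<forall>a2\<in>A. F (a0, a1, a2) \<in> {a0, a1, a2} \<union> (UNIV - A)"
    have "c.xx \<in> A" "c.yy \<in> A" "c.zz \<in> A" using c.brs A by auto
    then have "F (c.xx, c.yy, c.zz) \<in> {c.xx, c.yy, c.zz} \<union> (UNIV - A)" using H by blast
    then show False using FF ne a3A by auto
  qed
qed

end
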